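(* Suppose nature draws $\bar g$ uniformly at random from $\mathcal{G}_{2k+1}$. Let $\mathcal{D}$ be the distribution of $(\bm{x},y)$ with $\bm{x}\sim\mathrm{Unif}[-1,1]^p$ and $y=\bar g(\bm{x})+\epsilon$, where $\epsilon\sim N(0,\sigma_\epsilon^2)$ is independent of $\bm{x}$. The learner observes $n$ i.i.d. samples from $\mathcal{D}$. For $g\in\mathcal{G}_{2k+1}$ define $h_g(\bm{x},y)=\frac12(y-g(\bm{x}))^2$, and let $\mathcal{H}_{2k+1}=\{h_g : g\in\mathcal{G}_{2k+1}\}$. Set $\bar h=h_{\bar g}$, and let $\hat h=h_{\hat g}$ for any estimator $\hat g$, i.e. any function of the sample taking values in $\mathcal{G}_{2k+1}$. If $$n\le\Big(\log\Big(q^{k+1}\binom{p}{k+1}\Big)-2\log2\Big)\frac{\sigma_\epsilon^2}{2},$$ then with probability at least $\tfrac12$, $$\mathbb{E}_{\mathcal{D}}[\hat h]-\mathbb{E}_{\mathcal{D}}[\bar h]\ge1,$$ where $\mathbb{E}_\mathcal{D}[h]=\mathbb{E}_{(\bm{x},y)\sim\mathcal{D}}[h(\bm{x},y)]$ is computed with $\hat g$ held fixed.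
   Context: For $i=1,\dots,q$ let $\phi_i(z)=\sqrt2\cos(i\pi z)$ on $[-1,1]$. Let $p,q,k$ be positive integers with $k+1\le p$. $\mathcal{G}_{2k+1}$ is the set of functions $g_\mathcal{A}(\bm{x})=\prod_{(i,j)\in\mathcal{A}}\phi_i(x_j)$ on $[-1,1]^p$, where $\mathcal{A}\subseteq\{1,\dots,q\}\times\{1,\dots,p\}$ satisfies: - $|\mathcal{A}|\le k+1$; - no two elements of $\mathcal{A}$ share the same second coordinate $j$. The empty product is the constant $1$. *)

theory Defs
  imports "HOL-Probability.Probability"
begin

definition phi :: "nat \<Rightarrow> real \<Rightarrow> real" where
  "phi i z = sqrt 2 * cos (real i * pi * z)"

text \<open>Points of [-1,1]^p are functions nat => real, with coordinates 1..p.\<close>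
definition admissible :: "nat \<Rightarrow> nat \<Rightarrow> nat \<Rightarrow> (nat \<times> nat) set \<Rightarrow> bool" where
  "admissible p q k A \<longleftrightarrow> A \<subseteq> {1..q} \<times> {1..p} \<and> card A \<le> k + 1 \<and> inj_on snd A"

definition gA :: "(nat \<times> nat) set \<Rightarrow> (nat \<Rightarrow> real) \<Rightarrow> real" where
  "gA A x = (\<Prod>(i,j)\<in>A. phi i (x j))"

definition Gcls :: "nat \<Rightarrow> nat \<Rightarrow> nat \<Rightarrow> ((nat \<Rightarrow> real) \<Rightarrow> real) set" where
  "Gcls p q k = gA ` {A. admissible p q k A}"

definition X_dist :: "nat \<Rightarrow> (nat \<Rightarrow> real) measure" where
  "X_dist p = PiM {1..p} (\<lambda>_. uniform_measure lborel {-1..1::real})"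

text \<open>Noise N(0, sigma^2), sigma the standard deviation.\<close>
definition noise :: "real \<Rightarrow> real measure" where
  "noise \<sigma> = density lborel (normal_density 0 \<sigma>)"

definition obs_space :: "nat \<Rightarrow> ((nat \<Rightarrow> real) \<times> real) measure" where
  "obs_space p = PiM {1..p} (\<lambda>_. borel) \<Otimes>\<^sub>M borel"

definition D_dist :: "nat \<Rightarrow> real \<Rightarrow> ((nat \<Rightarrow> real) \<Rightarrow> real) \<Rightarrow> ((nat \<Rightarrow> real) \<times> real) measure" where
  "D_dist p \<sigma> g = distr (X_dist p \<Otimes>\<^sub>M noise \<sigma>) (obs_space p) (\<lambda>(x, e). (x, g x + e))"

definition sample_space :: "nat \<Rightarrow> nat \<Rightarrow> (nat \<Rightarrow> (nat \<Rightarrow> real) \<times> real) measure" where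
  "sample_space n p = PiM {..<n} (\<lambda>_. obs_space p)"

definition sample_dist :: "nat \<Rightarrow> nat \<Rightarrow> real \<Rightarrow> ((nat \<Rightarrow> real) \<Rightarrow> real) \<Rightarrow> (nat \<Rightarrow> (nat \<Rightarrow> real) \<times> real) measure" where
  "sample_dist n p \<sigma> g = PiM {..<n} (\<lambda>_. D_dist p \<sigma> g)"

definition hloss :: "((nat \<Rightarrow> real) \<Rightarrow> real) \<Rightarrow> (nat \<Rightarrow> real) \<times> real \<Rightarrow> real" where
  "hloss g = (\<lambda>(x, y). (y - g x)\<^sup>2 / 2)"

definition risk :: "((nat \<Rightarrow> real) \<times> real) measure \<Rightarrow> ((nat \<Rightarrow> real) \<Rightarrow> real) \<Rightarrow> real" where
  "risk D g = (\<integral>z. hloss g z \<partial>D)"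

end

theory Submission
  imports Defs
begin


abbreviation U :: "real measure" where "U \<equiv> uniform_measure lborel {-1..1::real}"

lemma U_prob: "prob_space U"
  by (rule prob_space_uniform_measure) auto

lemma U_eq: "U = density lborel (\<lambda>x. ennreal (indicator {-1..1::real} x / 2))"
  unfolding uniform_measure_def
  by (intro density_cong) (auto simp: indicator_def ennreal_divide_numeral[symmetric] divide_ennreal_def)

lemma U_integral:
  fixes f :: "real \<Rightarrow> real"
  assumes [measurable]: "f \<in> borel_measurable borel"
  shows "(\<integral>x. f x \<partial>U) = (\<integral>x. f x * indicator {-1..1} x \<partial>lborel) / 2"
proof -
  have "(\<integral>x. f x \<partial>U) = (\<integral>x. (indicator {-1..1::real} x / 2) *\<^sub>R f x \<partial>lborel)"
    unfolding U_eq by (subst integral_density) auto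
  also have "\<dots> = (\<integral>x. f x * indicator {-1..1} x \<partial>lborel) / 2"
    by (simp add: mult.commute)
  finally show ?thesis .
qed

lemma int_cos:
  fixes m :: int
  shows "(\<integral>x. cos (real_of_int m * pi * x) * indicator {-1..1} x \<partial>lborel) = (if m = 0 then 2 else 0)"
proof (cases "m = 0")
  case True
  then show ?thesis
    using integral_FTC_Icc_real[of "-1" 1 "\<lambda>x. x" "\<lambda>x. 1"] by (auto intro!: derivative_eq_intros)
next
  case False
  have "(\<integral>x. cos (real_of_int m * pi * x) * indicator {-1..1} x \<partial>lborel)
    = sin (real_of_int m * pi * 1) / (real_of_int m * pi) - sin (real_of_int m * pi * (-1)) / (real_of_int m * pi)"
    using False
    by (intro integral_FTC_Icc_real) (auto intro!: derivative_eq_intros simp: field_simps)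
  also have "\<dots> = 0"
    using sin_zero_iff_int2[of "real_of_int m * pi"] by auto
  finally show ?thesis using False by simp
qed

lemma U_cos: "(\<integral>x. cos (real_of_int m * pi * x) \<partial>U) = (if m = 0 then 1 else 0)"
  by (subst U_integral) (auto simp: int_cos)

lemma U_bdd_integrable:
  fixes f :: "real \<Rightarrow> real"
  assumes [measurable]: "f \<in> borel_measurable borel" and "\<And>x. \<bar>f x\<bar> \<le> B"
  shows "integrable U f"
proof -
  interpret prob_space U by (rule U_prob)
  show ?thesis using assms by (intro integrable_const_bound[where B=B]) auto
qed

definition psi :: "nat \<Rightarrow> real \<Rightarrow> real" where
  "psi i z = (if i = 0 then 1 else phi i z)"

lemma psi_measurable[measurable]: "psi i \<in> borel_measurable borel"
  unfolding psi_def phi_def by measurable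

lemma abs_phi_le: "\<bar>phi i z\<bar> \<le> sqrt 2"
  unfolding phi_def by (auto simp: abs_mult)

lemma abs_psi_le: "\<bar>psi i z\<bar> \<le> sqrt 2"
  unfolding psi_def using abs_phi_le[of i z] by auto

lemma U_psi_orth: "(\<integral>z. psi a z * psi b z \<partial>U) = (if a = b then 1 else 0)"
proof -
  interpret prob_space U by (rule U_prob)
  have cosint: "\<And>m. integrable U (\<lambda>x. cos (real_of_int m * pi * x))"
    by (rule U_bdd_integrable[where B=1]) auto
  show ?thesis
  proof (cases "a = 0")
    case a: True
    show ?thesis
    proof (cases "b = 0")
      case True with a show ?thesis by (simp add: psi_def)
    next
      case False
      have "(\<integral>z. psi a z * psi b z \<partial>U) = (\<integral>z. sqrt 2 * cos (real_of_int (int b) * pi * z) \<partial>U)"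
        using a False by (simp add: psi_def phi_def)
      also have "\<dots> = 0" using False U_cos[of "int b"] by simp
      finally show ?thesis using a False by simp
    qed
  next
    case a: False
    show ?thesis
    proof (cases "b = 0")
      case b: True
      have "(\<integral>z. psi a z * psi b z \<partial>U) = (\<integral>z. sqrt 2 * cos (real_of_int (int a) * pi * z) \<partial>U)"
        using a b by (simp add: psi_def phi_def)
      also have "\<dots> = 0" using a U_cos[of "int a"] by simp
      finally show ?thesis using a b by simp
    next
      case b: False
      have eq: "psi a z * psi b z = cos (real_of_int (int a - int b) * pi * z) + cos (real_of_int (int a + int b) * pi * z)" for z
      proof -
        have s2: "sqrt 2 * sqrt 2 = (2::real)" by simp
        have "psi a z * psi b z = (sqrt 2 * sqrt 2) * (cos (real a * pi * z) * cos (real b * pi * z))"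
          using a b by (simp add: psi_def phi_def)
        also have "\<dots> = cos (real a * pi * z - real b * pi * z) + cos (real a * pi * z + real b * pi * z)"
          unfolding s2 cos_times_cos by simp
        finally show ?thesis by (simp add: algebra_simps)
      qed
      have "(\<integral>z. psi a z * psi b z \<partial>U) = (\<integral>z. cos (real_of_int (int a - int b) * pi * z) \<partial>U) + (\<integral>z. cos (real_of_int (int a + int b) * pi * z) \<partial>U)"
        unfolding eq by (rule Bochner_Integration.integral_add[OF cosint cosint])
      also have "\<dots> = (if a = b then 1 else 0)"
        using a b by (simp only: U_cos) simp
      finally show ?thesis .
    qed
  qed
qed


lemma sets_X: "sets (X_dist p) = sets (PiM {1..p} (\<lambda>_. borel))"
  unfolding X_dist_def by (intro sets_PiM_cong) auto

lemma space_X: "space (X_dist p) = space (PiM {1..p} (\<lambda>_. (borel::real measure)))"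
  using sets_X sets_eq_imp_space_eq by blast

lemma X_prob: "prob_space (X_dist p)"
  unfolding X_dist_def using U_prob by (intro prob_space_PiM) auto

lemma phi_measurable[measurable]: "phi i \<in> borel_measurable borel"
  unfolding phi_def by measurable

lemma gA_meas_borel:
  assumes "A \<subseteq> UNIV \<times> {1..p}"
  shows "gA A \<in> borel_measurable (PiM {1..p} (\<lambda>_. (borel::real measure)))"
proof -
  have "(\<lambda>x. \<Prod>a\<in>A. phi (fst a) (x (snd a))) \<in> borel_measurable (PiM {1..p} (\<lambda>_. (borel::real measure)))"
  proof (intro borel_measurable_prod)
    fix a assume "a \<in> A"
    then have "snd a \<in> {1..p}" using assms by auto
    then show "(\<lambda>x. phi (fst a) (x (snd a))) \<in> borel_measurable (PiM {1..p} (\<lambda>_. (borel::real measure)))"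
      by measurable
  qed
  moreover have "gA A = (\<lambda>x. \<Prod>a\<in>A. phi (fst a) (x (snd a)))"
    by (auto simp: gA_def fun_eq_iff case_prod_beta)
  ultimately show ?thesis by simp
qed

lemma gA_meas_X:
  assumes "A \<subseteq> UNIV \<times> {1..p}"
  shows "gA A \<in> borel_measurable (X_dist p)"
  using gA_meas_borel[OF assms] measurable_cong_sets[OF sets_X refl] by blast

definition idx :: "(nat \<times> nat) set \<Rightarrow> nat \<Rightarrow> nat" where
  "idx A j = (if j \<in> snd ` A then fst (the_inv_into A snd j) else 0)"

lemma idx_mem:
  assumes "inj_on snd A" "(i, j) \<in> A"
  shows "idx A j = i"
proof -
  have "the_inv_into A snd (snd (i,j)) = (i,j)"
    by (rule the_inv_into_f_f[OF assms(1) assms(2)])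
  then show ?thesis using assms(2) unfolding idx_def by force
qed

lemma idx_nmem:
  assumes "j \<notin> snd ` A"
  shows "idx A j = 0"
  using assms unfolding idx_def by auto

lemma idx_cases:
  assumes "inj_on snd A"
  shows "idx A j = 0 \<and> j \<notin> snd ` A \<or> (idx A j, j) \<in> A"
proof (cases "j \<in> snd ` A")
  case True
  then obtain i where "(i,j) \<in> A" by force
  then show ?thesis using idx_mem[OF assms] by auto
qed (auto simp: idx_nmem)

lemma gA_prod:
  assumes A: "A \<subseteq> {1..q} \<times> {1..p}" "inj_on snd A"
  shows "gA A x = (\<Prod>j\<in>{1..p}. psi (idx A j) (x j))"
proof -
  have fin: "finite A" using A(1) finite_subset by blast
  have "gA A x = (\<Prod>a\<in>A. psi (idx A (snd a)) (x (snd a)))"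
    unfolding gA_def
  proof (intro prod.cong refl, clarify)
    fix i j assume ij: "(i, j) \<in> A"
    then have "i \<ge> 1" using A(1) by auto
    then show "phi i (x j) = psi (idx A (snd (i, j))) (x (snd (i, j)))"
      using idx_mem[OF A(2) ij] by (simp add: psi_def)
  qed
  also have "\<dots> = (\<Prod>j\<in>snd ` A. psi (idx A j) (x j))"
    by (rule prod.reindex[OF A(2), symmetric, unfolded comp_def])
  also have "\<dots> = (\<Prod>j\<in>{1..p}. psi (idx A j) (x j))"
    using A(1) by (intro prod.mono_neutral_left) (auto simp: idx_nmem psi_def)
  finally show ?thesis .
qed

lemma idx_eq_iff:
  assumes A: "A \<subseteq> {1..q} \<times> {1..p}" "inj_on snd A"
  assumes B: "B \<subseteq> {1..q} \<times> {1..p}" "inj_on snd B"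
  shows "(\<forall>j\<in>{1..p}. idx A j = idx B j) \<longleftrightarrow> A = B"
proof
  assume H: "\<forall>j\<in>{1..p}. idx A j = idx B j"
  have sub: "S \<subseteq> T"
    if S: "S \<subseteq> {1..q} \<times> {1..p}" "inj_on snd S" and T: "T \<subseteq> {1..q} \<times> {1..p}" "inj_on snd T"
      and H: "\<forall>j\<in>{1..p}. idx S j = idx T j" for S T
  proof clarify
    fix i j assume ij: "(i, j) \<in> S"
    then have j: "j \<in> {1..p}" and i: "i \<ge> 1" using S by auto
    have "idx T j = i" using H j idx_mem[OF S(2) ij] by auto
    then show "(i, j) \<in> T" using idx_cases[OF T(2), of j] i by auto
  qed
  show "A = B" using sub[OF A B H] sub[OF B A] H by auto
qed simp

lemma abs_psi_prod_le: "\<bar>psi a x\<bar> * \<bar>psi b x\<bar> \<le> 2"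
proof -
  have "\<bar>psi a x\<bar> * \<bar>psi b x\<bar> \<le> sqrt 2 * sqrt 2"
    by (rule mult_mono[OF abs_psi_le abs_psi_le]) auto
  then show ?thesis by simp
qed

lemma X_orth:
  assumes A: "A \<subseteq> {1..q} \<times> {1..p}" "inj_on snd A"
  assumes B: "B \<subseteq> {1..q} \<times> {1..p}" "inj_on snd B"
  shows "(\<integral>x. gA A x * gA B x \<partial>X_dist p) = (if A = B then 1 else 0)"
proof -
  interpret U: prob_space U by (rule U_prob)
  interpret P: product_sigma_finite "\<lambda>_. U" by standard
  have "(\<integral>x. gA A x * gA B x \<partial>X_dist p) = (\<integral>x. (\<Prod>j\<in>{1..p}. psi (idx A j) (x j) * psi (idx B j) (x j)) \<partial>PiM {1..p} (\<lambda>_. U))"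
    unfolding X_dist_def gA_prod[OF A] gA_prod[OF B] by (simp add: prod.distrib)
  also have "\<dots> = (\<Prod>j\<in>{1..p}. (\<integral>z. psi (idx A j) z * psi (idx B j) z \<partial>U))"
    by (rule P.product_integral_prod) (auto intro!: U_bdd_integrable[where B=2] simp: abs_mult abs_psi_prod_le)
  also have "\<dots> = (\<Prod>j\<in>{1..p}. (if idx A j = idx B j then 1 else 0))"
    by (simp add: U_psi_orth)
  also have "\<dots> = (if A = B then 1 else 0)"
  proof (cases "A = B")
    case True then show ?thesis by simp
  next
    case False
    then obtain j where "j \<in> {1..p}" "idx A j \<noteq> idx B j" using idx_eq_iff[OF A B] by blast
    then have "(\<Prod>j\<in>{1..p}. (if idx A j = idx B j then 1 else 0::real)) = 0"
      by (subst prod_zero_iff) auto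
    then show ?thesis using False by simp
  qed
  finally show ?thesis .
qed


lemma N_prob: "\<sigma> > 0 \<Longrightarrow> prob_space (noise \<sigma>)"
  unfolding noise_def by (rule prob_space_normal_density)

lemma N_int1:
  assumes "\<sigma> > 0"
  shows "integrable (noise \<sigma>) (\<lambda>e. e)" "(\<integral>e. e \<partial>noise \<sigma>) = 0"
proof -
  show "integrable (noise \<sigma>) (\<lambda>e. e)"
    unfolding noise_def by (subst integrable_density) (auto intro: integrable_normal_moment_nz_1[OF assms])
  show "(\<integral>e. e \<partial>noise \<sigma>) = 0"
    unfolding noise_def by (subst integral_density) (auto simp: integral_normal_moment_nz_1[OF assms])
qed

lemma N_int2:
  assumes "\<sigma> > 0"
  shows "integrable (noise \<sigma>) (\<lambda>e. e\<^sup>2)" "(\<integral>e. e\<^sup>2 \<partial>noise \<sigma>) = \<sigma>\<^sup>2"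
proof -
  have i: "integrable lborel (\<lambda>x. normal_density 0 \<sigma> x * (x - 0)^2)"
    by (rule integrable_normal_moment[OF assms])
  show "integrable (noise \<sigma>) (\<lambda>e. e\<^sup>2)"
    unfolding noise_def using i by (subst integrable_density) auto
  have "(\<integral>x. normal_density 0 \<sigma> x * (x - 0)^(2*1) \<partial>lborel) = fact (2 * 1) / ((2 / \<sigma>\<^sup>2)^1 * fact 1)"
    by (rule integral_normal_moment_even[OF assms])
  then show "(\<integral>e. e\<^sup>2 \<partial>noise \<sigma>) = \<sigma>\<^sup>2"
    unfolding noise_def by (subst integral_density) auto
qed

lemma pair_mult_integrable:
  fixes u :: "'a \<Rightarrow> real" and v :: "'b \<Rightarrow> real"
  assumes M1: "sigma_finite_measure M1" and M2: "sigma_finite_measure M2"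
    and u: "integrable M1 u" and v: "integrable M2 v"
  shows "integrable (M1 \<Otimes>\<^sub>M M2) (\<lambda>z. u (fst z) * v (snd z))"
    and "(\<integral>z. u (fst z) * v (snd z) \<partial>(M1 \<Otimes>\<^sub>M M2)) = (\<integral>x. u x \<partial>M1) * (\<integral>y. v y \<partial>M2)"
proof -
  interpret P: pair_sigma_finite M1 M2 using M1 M2 by (auto simp: pair_sigma_finite_def)
  have [measurable]: "u \<in> borel_measurable M1" "v \<in> borel_measurable M2" using u v by auto
  have "(\<integral>\<^sup>+z. ennreal (norm (u (fst z) * v (snd z))) \<partial>(M1 \<Otimes>\<^sub>M M2))
      = (\<integral>\<^sup>+x. \<integral>\<^sup>+y. ennreal (norm (u x)) * ennreal (norm (v y)) \<partial>M2 \<partial>M1)"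
    by (subst P.M2.nn_integral_fst[symmetric]) (auto simp: abs_mult ennreal_mult)
  also have "\<dots> = (\<integral>\<^sup>+x. ennreal (norm (u x)) * (\<integral>\<^sup>+y. ennreal (norm (v y)) \<partial>M2) \<partial>M1)"
    by (simp add: nn_integral_cmult)
  also have "\<dots> = (\<integral>\<^sup>+x. ennreal (norm (u x)) \<partial>M1) * (\<integral>\<^sup>+y. ennreal (norm (v y)) \<partial>M2)"
    by (simp add: nn_integral_multc)
  also have "\<dots> < \<infinity>"
    using u v by (simp add: integrable_iff_bounded ennreal_mult_less_top)
  finally show I: "integrable (M1 \<Otimes>\<^sub>M M2) (\<lambda>z. u (fst z) * v (snd z))"
    by (simp add: integrable_iff_bounded)
  have "(\<integral>z. u (fst z) * v (snd z) \<partial>(M1 \<Otimes>\<^sub>M M2)) = (\<integral>x. (\<integral>y. u x * v y \<partial>M2) \<partial>M1)"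
    using P.integral_fst'[OF I] by simp
  also have "\<dots> = (\<integral>x. u x * (\<integral>y. v y \<partial>M2) \<partial>M1)"
    by simp
  also have "\<dots> = (\<integral>x. u x \<partial>M1) * (\<integral>y. v y \<partial>M2)"
    by simp
  finally show "(\<integral>z. u (fst z) * v (snd z) \<partial>(M1 \<Otimes>\<^sub>M M2)) = (\<integral>x. u x \<partial>M1) * (\<integral>y. v y \<partial>M2)" .
qed

lemma XN_poly:
  fixes a b :: "(nat \<Rightarrow> real) \<Rightarrow> real"
  assumes sig: "\<sigma> > 0"
    and am: "a \<in> borel_measurable (X_dist p)" and bm: "b \<in> borel_measurable (X_dist p)"
    and ab: "\<And>x. \<bar>a x\<bar> \<le> Ba" and bb: "\<And>x. \<bar>b x\<bar> \<le> Bb"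
  shows "integrable (X_dist p \<Otimes>\<^sub>M noise \<sigma>) (\<lambda>z. a (fst z) + b (fst z) * snd z + c * (snd z)\<^sup>2)"
    and "(\<integral>z. a (fst z) + b (fst z) * snd z + c * (snd z)\<^sup>2 \<partial>(X_dist p \<Otimes>\<^sub>M noise \<sigma>)) = (\<integral>x. a x \<partial>X_dist p) + c * \<sigma>\<^sup>2"
proof -
  interpret X: prob_space "X_dist p" by (rule X_prob)
  interpret N: prob_space "noise \<sigma>" by (rule N_prob[OF sig])
  have sX: "sigma_finite_measure (X_dist p)" "sigma_finite_measure (noise \<sigma>)" by unfold_locales
  have ia: "integrable (X_dist p) a" using am ab by (intro X.integrable_const_bound[where B=Ba]) auto
  have ib: "integrable (X_dist p) b" using bm bb by (intro X.integrable_const_bound[where B=Bb]) auto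
  have i1: "integrable (X_dist p) (\<lambda>_. c)" by simp
  note P1 = pair_mult_integrable[OF sX ia N.integrable_const[of "1::real"]]
  note P2 = pair_mult_integrable[OF sX ib N_int1(1)[OF sig]]
  note P3 = pair_mult_integrable[OF sX i1 N_int2(1)[OF sig]]
  have eq: "(\<lambda>z. a (fst z) + b (fst z) * snd z + c * (snd z)\<^sup>2) =
      (\<lambda>z. (a (fst z) * 1 + b (fst z) * snd z) + c * (snd z)\<^sup>2)" by simp
  show "integrable (X_dist p \<Otimes>\<^sub>M noise \<sigma>) (\<lambda>z. a (fst z) + b (fst z) * snd z + c * (snd z)\<^sup>2)"
    unfolding eq using P1(1) P2(1) P3(1) by auto
  let ?XN = "X_dist p \<Otimes>\<^sub>M noise \<sigma>"
  have "(\<integral>z. a (fst z) + b (fst z) * snd z + c * (snd z)\<^sup>2 \<partial>?XN)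
    = (\<integral>z. (a (fst z) * 1 + b (fst z) * snd z) \<partial>?XN) + (\<integral>z. c * (snd z)\<^sup>2 \<partial>?XN)"
    unfolding eq by (rule Bochner_Integration.integral_add[OF Bochner_Integration.integrable_add[OF P1(1) P2(1)] P3(1)])
  also have "(\<integral>z. (a (fst z) * 1 + b (fst z) * snd z) \<partial>?XN) = (\<integral>z. a (fst z) * 1 \<partial>?XN) + (\<integral>z. b (fst z) * snd z \<partial>?XN)"
    by (rule Bochner_Integration.integral_add[OF P1(1) P2(1)])
  also have "(\<integral>z. a (fst z) * 1 \<partial>?XN) = (\<integral>x. a x \<partial>X_dist p)"
    using P1(2) N.prob_space by simp
  also have "(\<integral>z. b (fst z) * snd z \<partial>?XN) = 0"
    using P2(2) N_int1(2)[OF sig] by simp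
  also have "(\<integral>z. c * (snd z)\<^sup>2 \<partial>?XN) = c * \<sigma>\<^sup>2"
    using P3(2) N_int2(2)[OF sig] X.prob_space by simp
  finally show "(\<integral>z. a (fst z) + b (fst z) * snd z + c * (snd z)\<^sup>2 \<partial>(X_dist p \<Otimes>\<^sub>M noise \<sigma>)) = (\<integral>x. a x \<partial>X_dist p) + c * \<sigma>\<^sup>2" by simp
qed

lemma sets_XN: "sets (X_dist p \<Otimes>\<^sub>M noise \<sigma>) = sets (PiM {1..p} (\<lambda>_. borel) \<Otimes>\<^sub>M (borel::real measure))"
  by (intro sets_pair_measure_cong sets_X) (simp add: noise_def)

lemma fg_meas:
  assumes gm[measurable]: "g \<in> borel_measurable (PiM {1..p} (\<lambda>_. (borel::real measure)))"
  shows "(\<lambda>(x, e). (x, g x + e)) \<in> measurable (X_dist p \<Otimes>\<^sub>M noise \<sigma>) (obs_space p)"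
proof -
  have "(\<lambda>(x, e). (x, g x + e)) \<in> measurable (PiM {1..p} (\<lambda>_. borel) \<Otimes>\<^sub>M (borel::real measure)) (obs_space p)"
    unfolding obs_space_def by measurable
  then show ?thesis using measurable_cong_sets[OF sets_XN refl] by blast
qed

lemma D_integral:
  fixes F :: "(nat \<Rightarrow> real) \<times> real \<Rightarrow> real"
  assumes gm: "g \<in> borel_measurable (PiM {1..p} (\<lambda>_. (borel::real measure)))"
    and Fm: "F \<in> borel_measurable (obs_space p)"
  shows "integrable (D_dist p \<sigma> g) F \<longleftrightarrow> integrable (X_dist p \<Otimes>\<^sub>M noise \<sigma>) (\<lambda>z. F (fst z, g (fst z) + snd z))"
    and "(\<integral>z. F z \<partial>D_dist p \<sigma> g) = (\<integral>z. F (fst z, g (fst z) + snd z) \<partial>(X_dist p \<Otimes>\<^sub>M noise \<sigma>))"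
proof -
  have e: "(\<lambda>z. F (fst z, g (fst z) + snd z)) = (\<lambda>z. F ((\<lambda>(x, e). (x, g x + e)) z))"
    by (auto simp: case_prod_beta)
  show "integrable (D_dist p \<sigma> g) F \<longleftrightarrow> integrable (X_dist p \<Otimes>\<^sub>M noise \<sigma>) (\<lambda>z. F (fst z, g (fst z) + snd z))"
    unfolding D_dist_def e by (rule integrable_distr_eq[OF fg_meas[OF gm] Fm])
  show "(\<integral>z. F z \<partial>D_dist p \<sigma> g) = (\<integral>z. F (fst z, g (fst z) + snd z) \<partial>(X_dist p \<Otimes>\<^sub>M noise \<sigma>))"
    unfolding D_dist_def e by (rule integral_distr[OF fg_meas[OF gm] Fm])
qed


lemma meas_X_of_borel:
  "f \<in> borel_measurable (PiM {1..p} (\<lambda>_. (borel::real measure))) \<Longrightarrow> f \<in> borel_measurable (X_dist p)"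
  using measurable_cong_sets[OF sets_X refl] by blast

lemma abs_gA_le: "\<bar>gA A x\<bar> \<le> sqrt 2 ^ card A"
proof -
  have "\<bar>gA A x\<bar> = (\<Prod>a\<in>A. \<bar>phi (fst a) (x (snd a))\<bar>)"
    unfolding gA_def by (simp add: abs_prod case_prod_beta)
  also have "\<dots> \<le> (\<Prod>a\<in>A. sqrt 2)"
    by (intro prod_mono) (auto simp: abs_phi_le)
  also have "\<dots> = sqrt 2 ^ card A" by simp
  finally show ?thesis .
qed

lemma risk_formula:
  assumes sig: "\<sigma> > 0"
    and gm[measurable]: "g \<in> borel_measurable (PiM {1..p} (\<lambda>_. (borel::real measure)))"
    and hm[measurable]: "h \<in> borel_measurable (PiM {1..p} (\<lambda>_. (borel::real measure)))"
    and gb: "\<And>x. \<bar>g x\<bar> \<le> Bg" and hb: "\<And>x. \<bar>h x\<bar> \<le> Bh"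
  shows "risk (D_dist p \<sigma> g) h = (\<integral>x. (g x - h x)\<^sup>2 / 2 \<partial>X_dist p) + 1/2 * \<sigma>\<^sup>2"
proof -
  have Fm: "hloss h \<in> borel_measurable (obs_space p)"
    unfolding hloss_def obs_space_def by measurable
  have "risk (D_dist p \<sigma> g) h = (\<integral>z. hloss h (fst z, g (fst z) + snd z) \<partial>(X_dist p \<Otimes>\<^sub>M noise \<sigma>))"
    unfolding risk_def by (rule D_integral(2)[OF gm Fm])
  also have "\<dots> = (\<integral>z. (\<lambda>x. (g x - h x)\<^sup>2 / 2) (fst z) + (\<lambda>x. g x - h x) (fst z) * snd z + 1/2 * (snd z)\<^sup>2 \<partial>(X_dist p \<Otimes>\<^sub>M noise \<sigma>))"
    by (intro Bochner_Integration.integral_cong refl) (simp add: hloss_def power2_eq_square field_simps)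
  also have "\<dots> = (\<integral>x. (g x - h x)\<^sup>2 / 2 \<partial>X_dist p) + 1/2 * \<sigma>\<^sup>2"
  proof (rule XN_poly(2)[OF sig])
    show "(\<lambda>x. (g x - h x)\<^sup>2 / 2) \<in> borel_measurable (X_dist p)"
      by (rule meas_X_of_borel) measurable
    show "(\<lambda>x. g x - h x) \<in> borel_measurable (X_dist p)"
      by (rule meas_X_of_borel) measurable
    show "\<bar>g x - h x\<bar> \<le> Bg + Bh" for x using gb[of x] hb[of x] by linarith
    show "\<bar>(g x - h x)\<^sup>2 / 2\<bar> \<le> (Bg + Bh)^2" for x
    proof -
      have "\<bar>g x - h x\<bar> \<le> Bg + Bh" using gb[of x] hb[of x] by linarith
      then have "(g x - h x)\<^sup>2 \<le> (Bg + Bh)^2"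
        by (metis abs_le_square_iff abs_of_nonneg abs_ge_zero order_trans power2_abs)
      moreover have "(Bg + Bh)^2 \<ge> 0" by simp
      moreover have "\<bar>(g x - h x)\<^sup>2 / 2\<bar> = (g x - h x)\<^sup>2 / 2" by simp
      ultimately show ?thesis by linarith
    qed
  qed
  finally show ?thesis .
qed

lemma adm_sub: "admissible p q k A \<Longrightarrow> A \<subseteq> UNIV \<times> {1..p}"
  unfolding admissible_def by auto

lemma risk_diff:
  assumes sig: "\<sigma> > 0" and A: "admissible p q k A" and B: "admissible p q k B" and AB: "A \<noteq> B"
  shows "risk (D_dist p \<sigma> (gA A)) (gA B) - risk (D_dist p \<sigma> (gA A)) (gA A) = 1"
proof -
  interpret X: prob_space "X_dist p" by (rule X_prob)
  have As: "A \<subseteq> {1..q} \<times> {1..p}" "inj_on snd A" and Bs: "B \<subseteq> {1..q} \<times> {1..p}" "inj_on snd B"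
    using A B unfolding admissible_def by auto
  note mA = gA_meas_borel[OF adm_sub[OF A]] and mB = gA_meas_borel[OF adm_sub[OF B]]
  have rA: "risk (D_dist p \<sigma> (gA A)) (gA A) = 1/2 * \<sigma>\<^sup>2"
    using risk_formula[OF sig mA mA abs_gA_le abs_gA_le] by simp
  have rB: "risk (D_dist p \<sigma> (gA A)) (gA B) = (\<integral>x. (gA A x - gA B x)\<^sup>2 / 2 \<partial>X_dist p) + 1/2 * \<sigma>\<^sup>2"
    by (rule risk_formula[OF sig mA mB abs_gA_le abs_gA_le])
  have mA': "gA A \<in> borel_measurable (X_dist p)" and mB': "gA B \<in> borel_measurable (X_dist p)"
    using meas_X_of_borel[OF mA] meas_X_of_borel[OF mB] .
  have bi: "integrable (X_dist p) (\<lambda>x. gA S x * gA T x)"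
    if "S = A \<or> S = B" "T = A \<or> T = B" for S T
  proof -
    have [measurable]: "gA S \<in> borel_measurable (X_dist p)" "gA T \<in> borel_measurable (X_dist p)"
      using that mA' mB' by auto
    show ?thesis
    proof (rule X.integrable_const_bound[where B="sqrt 2 ^ card S * sqrt 2 ^ card T"])
      show "AE x in X_dist p. norm (gA S x * gA T x) \<le> sqrt 2 ^ card S * sqrt 2 ^ card T"
        by (auto simp: abs_mult intro!: mult_mono abs_gA_le)
    qed measurable
  qed
  have "(\<integral>x. (gA A x - gA B x)\<^sup>2 / 2 \<partial>X_dist p)
      = ((\<integral>x. gA A x * gA A x \<partial>X_dist p) - 2 * (\<integral>x. gA A x * gA B x \<partial>X_dist p) + (\<integral>x. gA B x * gA B x \<partial>X_dist p)) / 2"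
  proof -
    have "(\<integral>x. (gA A x - gA B x)\<^sup>2 / 2 \<partial>X_dist p)
        = (\<integral>x. (gA A x * gA A x - 2 * (gA A x * gA B x) + gA B x * gA B x) / 2 \<partial>X_dist p)"
      by (intro Bochner_Integration.integral_cong refl) (simp add: power2_eq_square algebra_simps)
    also have "\<dots> = (\<integral>x. (gA A x * gA A x - 2 * (gA A x * gA B x) + gA B x * gA B x) \<partial>X_dist p) / 2"
      by simp
    also have "(\<integral>x. (gA A x * gA A x - 2 * (gA A x * gA B x) + gA B x * gA B x) \<partial>X_dist p)
       = (\<integral>x. gA A x * gA A x \<partial>X_dist p) - 2 * (\<integral>x. gA A x * gA B x \<partial>X_dist p) + (\<integral>x. gA B x * gA B x \<partial>X_dist p)"
      using bi[of A A] bi[of A B] bi[of B B] by simp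
    finally show ?thesis .
  qed
  also have "\<dots> = 1"
    using X_orth[OF As As] X_orth[OF As Bs] X_orth[OF Bs Bs] AB by simp
  finally show ?thesis using rA rB by simp
qed


lemma space_X_PiM: "x \<in> space (X_dist p) \<Longrightarrow> x \<in> space (PiM {1..p} (\<lambda>_. (borel::real measure)))"
  using space_X by blast

lemma shift_nn:
  fixes G :: "real \<Rightarrow> ennreal"
  assumes [measurable]: "G \<in> borel_measurable borel"
  shows "(\<integral>\<^sup>+y. G y \<partial>lborel) = (\<integral>\<^sup>+e. G (c + e) \<partial>lborel)"
proof -
  have "(\<integral>\<^sup>+y. G y \<partial>lborel) = (\<integral>\<^sup>+y. G y \<partial>distr lborel borel ((+) c))"
    by (simp add: lborel_distr_plus)
  also have "\<dots> = (\<integral>\<^sup>+e. G (c + e) \<partial>lborel)"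
    by (rule nn_integral_distr) auto
  finally show ?thesis .
qed

lemma D_nn:
  fixes F :: "(nat \<Rightarrow> real) \<times> real \<Rightarrow> ennreal"
  assumes sig: "\<sigma> > 0"
    and gm[measurable]: "g \<in> borel_measurable (PiM {1..p} (\<lambda>_. (borel::real measure)))"
    and Fm[measurable]: "F \<in> borel_measurable (obs_space p)"
  shows "(\<integral>\<^sup>+z. F z \<partial>D_dist p \<sigma> g) = (\<integral>\<^sup>+x. (\<integral>\<^sup>+y. ennreal (normal_density 0 \<sigma> (y - g x)) * F (x, y) \<partial>lborel) \<partial>X_dist p)"
proof -
  interpret X: prob_space "X_dist p" by (rule X_prob)
  interpret N: prob_space "noise \<sigma>" by (rule N_prob[OF sig])
  interpret P: pair_sigma_finite "X_dist p" "noise \<sigma>" by unfold_locales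
  have comp: "(\<lambda>z. F (fst z, g (fst z) + snd z)) \<in> borel_measurable (X_dist p \<Otimes>\<^sub>M noise \<sigma>)"
    using measurable_comp[OF fg_meas[OF gm] Fm] by (simp add: comp_def case_prod_beta)
  have "(\<integral>\<^sup>+z. F z \<partial>D_dist p \<sigma> g) = (\<integral>\<^sup>+z. F ((\<lambda>(x, e). (x, g x + e)) z) \<partial>(X_dist p \<Otimes>\<^sub>M noise \<sigma>))"
    unfolding D_dist_def by (rule nn_integral_distr[OF fg_meas[OF gm]]) simp
  also have "\<dots> = (\<integral>\<^sup>+z. F (fst z, g (fst z) + snd z) \<partial>(X_dist p \<Otimes>\<^sub>M noise \<sigma>))"
    by (simp add: case_prod_beta)
  also have "\<dots> = (\<integral>\<^sup>+x. (\<integral>\<^sup>+e. F (x, g x + e) \<partial>noise \<sigma>) \<partial>X_dist p)"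
    using N.nn_integral_fst[OF comp] by simp
  also have "\<dots> = (\<integral>\<^sup>+x. (\<integral>\<^sup>+y. ennreal (normal_density 0 \<sigma> (y - g x)) * F (x, y) \<partial>lborel) \<partial>X_dist p)"
  proof (intro nn_integral_cong)
    fix x assume "x \<in> space (X_dist p)"
    then have x: "x \<in> space (PiM {1..p} (\<lambda>_. (borel::real measure)))" by (rule space_X_PiM)
    have Fx[measurable]: "(\<lambda>y. F (x, y)) \<in> borel_measurable borel"
      using measurable_Pair2[OF Fm[unfolded obs_space_def] x] .
    have "(\<integral>\<^sup>+e. F (x, g x + e) \<partial>noise \<sigma>) = (\<integral>\<^sup>+e. ennreal (normal_density 0 \<sigma> e) * F (x, g x + e) \<partial>lborel)"
      unfolding noise_def by (subst nn_integral_density) auto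
    also have "\<dots> = (\<integral>\<^sup>+y. ennreal (normal_density 0 \<sigma> (y - g x)) * F (x, y) \<partial>lborel)"
      by (subst shift_nn[where c="g x"]) auto
    finally show "(\<integral>\<^sup>+e. F (x, g x + e) \<partial>noise \<sigma>) = (\<integral>\<^sup>+y. ennreal (normal_density 0 \<sigma> (y - g x)) * F (x, y) \<partial>lborel)" .
  qed
  finally show ?thesis .
qed

definition ell :: "real \<Rightarrow> ((nat \<Rightarrow> real) \<Rightarrow> real) \<Rightarrow> (nat \<Rightarrow> real) \<times> real \<Rightarrow> real" where
  "ell \<sigma> g z = exp ((2 * snd z * g (fst z) - (g (fst z))\<^sup>2) / (2 * \<sigma>\<^sup>2))"

lemma nd_shift: "normal_density 0 \<sigma> (y - a) = normal_density 0 \<sigma> y * exp ((2 * y * a - a\<^sup>2) / (2 * \<sigma>\<^sup>2))"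
proof -
  have "-(y - a - 0)\<^sup>2 / (2 * \<sigma>\<^sup>2) = -(y - 0)\<^sup>2 / (2 * \<sigma>\<^sup>2) + (2 * y * a - a\<^sup>2) / (2 * \<sigma>\<^sup>2)"
    by (simp add: power2_eq_square add_divide_distrib[symmetric] diff_divide_distrib[symmetric] algebra_simps)
  then have "exp (-(y - a - 0)\<^sup>2 / (2 * \<sigma>\<^sup>2)) = exp (-(y - 0)\<^sup>2 / (2 * \<sigma>\<^sup>2)) * exp ((2 * y * a - a\<^sup>2) / (2 * \<sigma>\<^sup>2))"
    by (simp only: exp_add[symmetric])
  then show ?thesis unfolding normal_density_def by simp
qed

lemma ell_meas[measurable]:
  assumes [measurable]: "g \<in> borel_measurable (PiM {1..p} (\<lambda>_. (borel::real measure)))"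
  shows "ell \<sigma> g \<in> borel_measurable (obs_space p)"
  unfolding ell_def obs_space_def by measurable

lemma D_density:
  assumes sig: "\<sigma> > 0"
    and gm[measurable]: "g \<in> borel_measurable (PiM {1..p} (\<lambda>_. (borel::real measure)))"
  shows "D_dist p \<sigma> g = density (D_dist p \<sigma> (\<lambda>_. 0)) (\<lambda>z. ennreal (ell \<sigma> g z))"
proof (rule measure_eqI)
  show "sets (D_dist p \<sigma> g) = sets (density (D_dist p \<sigma> (\<lambda>_. 0)) (\<lambda>z. ennreal (ell \<sigma> g z)))"
    by (simp add: D_dist_def)
  fix C assume "C \<in> sets (D_dist p \<sigma> g)"
  then have C[measurable]: "C \<in> sets (obs_space p)" by (simp add: D_dist_def)
  have zm: "(\<lambda>_. 0::real) \<in> borel_measurable (PiM {1..p} (\<lambda>_. (borel::real measure)))" by simp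
  have "emeasure (D_dist p \<sigma> g) C = (\<integral>\<^sup>+z. indicator C z \<partial>D_dist p \<sigma> g)"
    using C by (simp add: D_dist_def)
  also have "\<dots> = (\<integral>\<^sup>+x. (\<integral>\<^sup>+y. ennreal (normal_density 0 \<sigma> (y - g x)) * indicator C (x, y) \<partial>lborel) \<partial>X_dist p)"
    by (rule D_nn[OF sig gm]) simp
  also have "\<dots> = (\<integral>\<^sup>+x. (\<integral>\<^sup>+y. ennreal (normal_density 0 \<sigma> (y - 0)) * (ennreal (ell \<sigma> g (x, y)) * indicator C (x, y)) \<partial>lborel) \<partial>X_dist p)"
    by (intro nn_integral_cong) (simp add: nd_shift ell_def ennreal_mult' mult.assoc)
  also have "\<dots> = (\<integral>\<^sup>+z. ennreal (ell \<sigma> g z) * indicator C z \<partial>D_dist p \<sigma> (\<lambda>_. 0))"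
    by (rule D_nn[OF sig zm, symmetric]) simp
  also have "\<dots> = emeasure (density (D_dist p \<sigma> (\<lambda>_. 0)) (\<lambda>z. ennreal (ell \<sigma> g z))) C"
    by (subst emeasure_density) (auto simp: D_dist_def)
  finally show "emeasure (D_dist p \<sigma> g) C = emeasure (density (D_dist p \<sigma> (\<lambda>_. 0)) (\<lambda>z. ennreal (ell \<sigma> g z))) C" .
qed


lemma indicator_PiE_prod:
  assumes "S \<in> space (PiM I M)" and fin: "finite I"
  shows "indicator (PiE I A) S = (\<Prod>i\<in>I. indicator (A i) (S i) :: ennreal)"
proof (cases "S \<in> PiE I A")
  case True
  then have "\<forall>i\<in>I. indicator (A i) (S i) = (1::ennreal)" by (auto simp: PiE_def Pi_def)
  then show ?thesis using True by simp
next
  case False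
  have ext: "S \<in> extensional I" using assms by (auto simp: space_PiM PiE_def)
  then obtain i where "i \<in> I" "S i \<notin> A i" using False by (auto simp: PiE_def)
  then have "(\<Prod>i\<in>I. indicator (A i) (S i) :: ennreal) = 0"
    using fin by (intro prod_zero) (auto intro!: bexI[of _ i])
  then show ?thesis using False by simp
qed

lemma PiM_density_const:
  fixes f :: "'a \<Rightarrow> ennreal"
  assumes fin: "finite I" and M: "prob_space M" and fm[measurable]: "f \<in> borel_measurable M"
    and Mf: "prob_space (density M f)"
  shows "PiM I (\<lambda>_. density M f) = density (PiM I (\<lambda>_. M)) (\<lambda>S. \<Prod>i\<in>I. f (S i))"
proof -
  interpret Q: product_prob_space "\<lambda>_. M" I
    unfolding product_prob_space_def product_prob_space_axioms_def product_sigma_finite_def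
    using M prob_space_imp_sigma_finite by auto
  interpret D: product_prob_space "\<lambda>_. density M f" I
    unfolding product_prob_space_def product_prob_space_axioms_def product_sigma_finite_def
    using Mf prob_space_imp_sigma_finite by auto
  have "density (PiM I (\<lambda>_. M)) (\<lambda>S. \<Prod>i\<in>I. f (S i)) = PiM I (\<lambda>_. density M f)"
  proof (rule D.PiM_eqI[OF fin])
    show "sets (density (PiM I (\<lambda>_. M)) (\<lambda>S. \<Prod>i\<in>I. f (S i))) = sets (PiM I (\<lambda>_. density M f))"
      unfolding sets_density by (intro sets_PiM_cong refl) (simp add: sets_density)
    fix A assume A: "\<And>i. i \<in> I \<Longrightarrow> A i \<in> sets (density M f)"
    then have A'[measurable]: "\<And>i. i \<in> I \<Longrightarrow> A i \<in> sets M" by simp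
    have PA: "PiE I A \<in> sets (PiM I (\<lambda>_. M))"
      using A' by (intro sets_PiM_I_finite fin) auto
    have "emeasure (density (PiM I (\<lambda>_. M)) (\<lambda>S. \<Prod>i\<in>I. f (S i))) (PiE I A)
        = (\<integral>\<^sup>+S. (\<Prod>i\<in>I. f (S i)) * indicator (PiE I A) S \<partial>PiM I (\<lambda>_. M))"
      by (rule emeasure_density[OF _ PA]) (auto intro!: borel_measurable_prod_ennreal)
    also have "\<dots> = (\<integral>\<^sup>+S. (\<Prod>i\<in>I. f (S i) * indicator (A i) (S i)) \<partial>PiM I (\<lambda>_. M))"
      by (intro nn_integral_cong) (simp add: indicator_PiE_prod[OF _ fin] prod.distrib)
    also have "\<dots> = (\<Prod>i\<in>I. (\<integral>\<^sup>+x. f x * indicator (A i) x \<partial>M))"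
      using A' by (intro Q.product_nn_integral_prod fin) auto
    also have "\<dots> = (\<Prod>i\<in>I. emeasure (density M f) (A i))"
      using A' by (intro prod.cong refl) (simp add: emeasure_density)
    finally show "emeasure (density (PiM I (\<lambda>_. M)) (\<lambda>S. \<Prod>i\<in>I. f (S i))) (PiE I A) = (\<Prod>i\<in>I. emeasure (density M f) (A i))" .
  qed
  then show ?thesis by simp
qed

lemma D_prob:
  assumes sig: "\<sigma> > 0"
    and gm: "g \<in> borel_measurable (PiM {1..p} (\<lambda>_. (borel::real measure)))"
  shows "prob_space (D_dist p \<sigma> g)"
proof -
  interpret X: prob_space "X_dist p" by (rule X_prob)
  interpret N: prob_space "noise \<sigma>" by (rule N_prob[OF sig])
  interpret P: pair_prob_space "X_dist p" "noise \<sigma>" by unfold_locales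
  show ?thesis unfolding D_dist_def by (rule P.prob_space_distr[OF fg_meas[OF gm]])
qed

lemma sample_density:
  assumes sig: "\<sigma> > 0"
    and gm[measurable]: "g \<in> borel_measurable (PiM {1..p} (\<lambda>_. (borel::real measure)))"
  shows "sample_dist n p \<sigma> g = density (sample_dist n p \<sigma> (\<lambda>_. 0)) (\<lambda>S. ennreal (\<Prod>i<n. ell \<sigma> g (S i)))"
proof -
  have zm: "(\<lambda>_. 0::real) \<in> borel_measurable (PiM {1..p} (\<lambda>_. (borel::real measure)))" by simp
  have em: "(\<lambda>z. ennreal (ell \<sigma> g z)) \<in> borel_measurable (D_dist p \<sigma> (\<lambda>_. 0))"
    by (simp add: D_dist_def)
  have "sample_dist n p \<sigma> g = PiM {..<n} (\<lambda>_. density (D_dist p \<sigma> (\<lambda>_. 0)) (\<lambda>z. ennreal (ell \<sigma> g z)))"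
    unfolding sample_dist_def D_density[OF sig gm] ..
  also have "\<dots> = density (sample_dist n p \<sigma> (\<lambda>_. 0)) (\<lambda>S. \<Prod>i<n. ennreal (ell \<sigma> g (S i)))"
    unfolding sample_dist_def
    by (rule PiM_density_const[OF _ D_prob[OF sig zm] em]) (auto simp: D_density[OF sig gm, symmetric] intro: D_prob[OF sig gm])
  also have "\<dots> = density (sample_dist n p \<sigma> (\<lambda>_. 0)) (\<lambda>S. ennreal (\<Prod>i<n. ell \<sigma> g (S i)))"
  proof -
    have "(\<lambda>S. \<Prod>i<n. ennreal (ell \<sigma> g (S i))) = (\<lambda>S. ennreal (\<Prod>i<n. ell \<sigma> g (S i)))"
      by (auto simp: prod_ennreal ell_def)
    then show ?thesis by simp
  qed
  finally show ?thesis .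
qed

lemma PiM_component_integral:
  fixes h :: "'a \<Rightarrow> real"
  assumes M: "prob_space M" and i: "i \<in> I" and hm: "h \<in> borel_measurable M"
  shows "integrable (PiM I (\<lambda>_. M)) (\<lambda>S. h (S i)) \<longleftrightarrow> integrable M h"
    and "(\<integral>S. h (S i) \<partial>PiM I (\<lambda>_. M)) = (\<integral>x. h x \<partial>M)"
proof -
  have d: "distr (PiM I (\<lambda>_. M)) M (\<lambda>\<omega>. \<omega> i) = M"
    using distr_PiM_component[of I "\<lambda>_. M" i] M i by auto
  have m: "(\<lambda>\<omega>. \<omega> i) \<in> measurable (PiM I (\<lambda>_. M)) M" using i by simp
  show "integrable (PiM I (\<lambda>_. M)) (\<lambda>S. h (S i)) \<longleftrightarrow> integrable M h"
    using integrable_distr_eq[OF m, of h] hm d by simp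
  show "(\<integral>S. h (S i) \<partial>PiM I (\<lambda>_. M)) = (\<integral>x. h x \<partial>M)"
    using integral_distr[OF m, of h] hm d by simp
qed


lemma DV_ineq:
  fixes Q :: "'a measure" and L :: "'a \<Rightarrow> real"
  assumes Q: "prob_space Q" and Lm[measurable]: "L \<in> borel_measurable Q"
    and Lpos: "\<And>x. x \<in> space Q \<Longrightarrow> L x > 0"
    and P: "prob_space (density Q (\<lambda>x. ennreal (L x)))"
    and li: "integrable (density Q (\<lambda>x. ennreal (L x))) (\<lambda>x. ln (L x))"
    and A[measurable]: "A \<in> sets Q" and c: "c \<ge> 0"
  shows "c * measure (density Q (\<lambda>x. ennreal (L x))) A
     \<le> (\<integral>x. ln (L x) \<partial>density Q (\<lambda>x. ennreal (L x))) + ln (1 + (exp c - 1) * measure Q A)"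
proof -
  interpret Q: prob_space Q by (rule Q)
  let ?P = "density Q (\<lambda>x. ennreal (L x))"
  interpret P: prob_space ?P by (rule P)
  define b where "b = measure Q A"
  define Z where "Z = 1 + (exp c - 1) * b"
  have b: "0 \<le> b" "b \<le> 1" unfolding b_def by auto
  have ec: "exp c \<ge> 1" using c by simp
  have Z: "Z > 0" unfolding Z_def using b ec by (smt (verit) mult_nonneg_nonneg)
  define f where "f x = c * indicator A x" for x
  have fm[measurable]: "f \<in> borel_measurable Q" unfolding f_def by measurable
  have sp: "space ?P = space Q" by simp
  have Psp: "measure ?P (space Q) = 1" using P.prob_space by simp
  have pw: "f x - ln (L x) - ln Z \<le> exp (f x) / (L x * Z) - 1" if x: "x \<in> space Q" for x
  proof -
    have Lx: "L x > 0" by (rule Lpos[OF x])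
    have u: "exp (f x) / (L x * Z) > 0" using Lx Z by simp
    have "ln (exp (f x) / (L x * Z)) = f x - ln (L x) - ln Z"
      using Lx Z by (simp add: ln_div ln_mult)
    then show ?thesis using ln_le_minus_one[OF u] by simp
  qed
  have iQ: "integrable Q (\<lambda>x. exp (f x) / Z)"
    by (rule Q.integrable_const_bound[where B="exp c / Z"]) (use Z c ec in \<open>auto simp: f_def indicator_def divide_right_mono\<close>)
  have iP1: "integrable ?P (\<lambda>x. exp (f x) / (L x * Z))"
  proof (subst integrable_density)
    show "integrable Q (\<lambda>x. L x *\<^sub>R (exp (f x) / (L x * Z)))"
      using iQ by (rule Bochner_Integration.integrable_cong[THEN iffD1, rotated 2]) (auto dest: Lpos)
  qed (auto dest: Lpos intro: less_imp_le)
  have intQ: "(\<integral>x. exp (f x) / Z \<partial>Q) = 1"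
  proof -
    have "(\<lambda>x. exp (f x) / Z) = (\<lambda>x. 1 / Z + ((exp c - 1) / Z) * indicator A x)"
      by (auto simp: f_def indicator_def fun_eq_iff add_divide_distrib[symmetric])
    moreover have ia: "integrable Q (\<lambda>x. ((exp c - 1) / Z) * indicator A x)"
      using A Q.emeasure_finite[of A] by (intro integrable_mult_right integrable_real_indicator) (auto simp: less_top[symmetric])
    moreover have "(\<integral>x. ((exp c - 1) / Z) * indicator A x \<partial>Q) = ((exp c - 1) / Z) * b"
      unfolding b_def by simp
    ultimately have "(\<integral>x. exp (f x) / Z \<partial>Q) = 1 / Z + ((exp c - 1) / Z) * b"
      by (simp only: Bochner_Integration.integral_add[OF Q.integrable_const ia]) (simp add: Q.prob_space)
    also have "\<dots> = 1" using Z unfolding Z_def by (simp add: field_simps)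
    finally show ?thesis .
  qed
  have intP1: "(\<integral>x. exp (f x) / (L x * Z) \<partial>?P) = 1"
  proof -
    have "(\<integral>x. exp (f x) / (L x * Z) \<partial>?P) = (\<integral>x. L x *\<^sub>R (exp (f x) / (L x * Z)) \<partial>Q)"
      by (rule integral_density) (auto dest: Lpos intro: less_imp_le)
    also have "\<dots> = (\<integral>x. exp (f x) / Z \<partial>Q)"
      by (intro Bochner_Integration.integral_cong refl) (auto dest: Lpos)
    finally show ?thesis using intQ by simp
  qed
  have iP2: "integrable ?P (\<lambda>x. f x - ln (L x) - ln Z)"
  proof -
    have "integrable ?P f"
      by (rule P.integrable_const_bound[where B=c]) (use c in \<open>auto simp: f_def indicator_def\<close>)
    then show ?thesis using li by auto
  qed
  have "(\<integral>x. f x - ln (L x) - ln Z \<partial>?P) \<le> (\<integral>x. exp (f x) / (L x * Z) - 1 \<partial>?P)"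
    by (rule integral_mono[OF iP2]) (use iP1 pw in auto)
  also have "\<dots> = 0" using iP1 intP1 Psp by simp
  finally have le: "(\<integral>x. f x - ln (L x) - ln Z \<partial>?P) \<le> 0" .
  have "(\<integral>x. f x - ln (L x) - ln Z \<partial>?P) = c * measure ?P A - (\<integral>x. ln (L x) \<partial>?P) - ln Z"
  proof -
    have "integrable ?P f"
      by (rule P.integrable_const_bound[where B=c]) (use c in \<open>auto simp: f_def indicator_def\<close>)
    then have "(\<integral>x. f x - ln (L x) - ln Z \<partial>?P) = (\<integral>x. f x \<partial>?P) - (\<integral>x. ln (L x) \<partial>?P) - ln Z"
      using li Psp by simp
    moreover have "(\<integral>x. f x \<partial>?P) = c * measure ?P A"
      unfolding f_def by simp
    ultimately show ?thesis by simp
  qed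
  with le show ?thesis unfolding Z_def b_def by simp
qed


lemma sets_D: "sets (D_dist p \<sigma> g) = sets (obs_space p)"
  by (simp add: D_dist_def)

lemma sets_sample: "sets (sample_dist n p \<sigma> g) = sets (sample_space n p)"
  unfolding sample_dist_def sample_space_def by (intro sets_PiM_cong) (auto simp: sets_D)

lemma space_sample: "space (sample_dist n p \<sigma> g) = space (sample_space n p)"
  by (rule sets_eq_imp_space_eq[OF sets_sample])

lemma sample_prob:
  assumes sig: "\<sigma> > 0"
    and gm: "g \<in> borel_measurable (PiM {1..p} (\<lambda>_. (borel::real measure)))"
  shows "prob_space (sample_dist n p \<sigma> g)"
  unfolding sample_dist_def using D_prob[OF sig gm] by (intro prob_space_PiM) auto

lemma lnell:
  assumes "\<sigma> > 0"
  shows "ln (ell \<sigma> g z) = (2 * snd z * g (fst z) - (g (fst z))\<^sup>2) / (2 * \<sigma>\<^sup>2)"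
  unfolding ell_def by simp

lemma ln_ell_D:
  assumes sig: "\<sigma> > 0" and A: "admissible p q k A"
  shows "integrable (D_dist p \<sigma> (gA A)) (\<lambda>z. ln (ell \<sigma> (gA A) z))"
    and "(\<integral>z. ln (ell \<sigma> (gA A) z) \<partial>D_dist p \<sigma> (gA A)) = 1 / (2 * \<sigma>\<^sup>2)"
proof -
  have As: "A \<subseteq> {1..q} \<times> {1..p}" "inj_on snd A" using A unfolding admissible_def by auto
  note gm = gA_meas_borel[OF adm_sub[OF A]]
  have gmX: "gA A \<in> borel_measurable (X_dist p)" by (rule meas_X_of_borel[OF gm])
  have Fm: "(\<lambda>z. ln (ell \<sigma> (gA A) z)) \<in> borel_measurable (obs_space p)"
    using ell_meas[OF gm] by measurable
  define B where "B = sqrt 2 ^ card A"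
  have gb: "\<bar>gA A x\<bar> \<le> B" for x unfolding B_def by (rule abs_gA_le)
  have eq: "(\<lambda>z. ln (ell \<sigma> (gA A) (fst z, gA A (fst z) + snd z))) =
     (\<lambda>z. (\<lambda>x. (gA A x)\<^sup>2 / (2 * \<sigma>\<^sup>2)) (fst z) + (\<lambda>x. gA A x / \<sigma>\<^sup>2) (fst z) * snd z + 0 * (snd z)\<^sup>2)"
    using sig by (auto simp: lnell fun_eq_iff power2_eq_square field_simps)
  have m1: "(\<lambda>x. (gA A x)\<^sup>2 / (2 * \<sigma>\<^sup>2)) \<in> borel_measurable (X_dist p)" using gmX by measurable
  have m2: "(\<lambda>x. gA A x / \<sigma>\<^sup>2) \<in> borel_measurable (X_dist p)" using gmX by measurable
  have b1: "\<bar>(gA A x)\<^sup>2 / (2 * \<sigma>\<^sup>2)\<bar> \<le> B\<^sup>2 / (2 * \<sigma>\<^sup>2)" for x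
  proof -
    have "(gA A x)\<^sup>2 \<le> B\<^sup>2" using gb[of x] by (metis abs_le_square_iff abs_of_nonneg abs_ge_zero order_trans)
    then show ?thesis using sig by (simp add: divide_right_mono)
  qed
  have b2: "\<bar>gA A x / \<sigma>\<^sup>2\<bar> \<le> B / \<sigma>\<^sup>2" for x
    using gb[of x] sig by (simp add: abs_div divide_right_mono)
  note P = XN_poly[OF sig m1 m2 b1 b2, of 0]
  show "integrable (D_dist p \<sigma> (gA A)) (\<lambda>z. ln (ell \<sigma> (gA A) z))"
    unfolding D_integral(1)[OF gm Fm] eq by (rule P(1))
  have "(\<integral>x. (gA A x)\<^sup>2 / (2 * \<sigma>\<^sup>2) \<partial>X_dist p) = (\<integral>x. gA A x * gA A x \<partial>X_dist p) / (2 * \<sigma>\<^sup>2)"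
    by (simp add: power2_eq_square)
  also have "\<dots> = 1 / (2 * \<sigma>\<^sup>2)" using X_orth[OF As As] by simp
  finally have i: "(\<integral>x. (gA A x)\<^sup>2 / (2 * \<sigma>\<^sup>2) \<partial>X_dist p) = 1 / (2 * \<sigma>\<^sup>2)" .
  show "(\<integral>z. ln (ell \<sigma> (gA A) z) \<partial>D_dist p \<sigma> (gA A)) = 1 / (2 * \<sigma>\<^sup>2)"
    unfolding D_integral(2)[OF gm Fm] eq P(2) i by simp
qed

lemma per_g:
  assumes sig: "\<sigma> > 0" and A: "admissible p q k A" and E: "E \<in> sets (sample_space n p)" and c: "c \<ge> 0"
  shows "c * measure (sample_dist n p \<sigma> (gA A)) E
    \<le> real n / (2 * \<sigma>\<^sup>2) + ln (1 + (exp c - 1) * measure (sample_dist n p \<sigma> (\<lambda>_. 0)) E)"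
proof -
  note gm = gA_meas_borel[OF adm_sub[OF A]]
  have zm: "(\<lambda>_. 0::real) \<in> borel_measurable (PiM {1..p} (\<lambda>_. (borel::real measure)))" by simp
  let ?Q = "sample_dist n p \<sigma> (\<lambda>_. 0)"
  let ?L = "\<lambda>S. \<Prod>i<n. ell \<sigma> (gA A) (S i)"
  have dens: "sample_dist n p \<sigma> (gA A) = density ?Q (\<lambda>S. ennreal (?L S))"
    by (rule sample_density[OF sig gm])
  have Lm: "?L \<in> borel_measurable ?Q"
  proof (rule borel_measurable_prod)
    fix i assume i: "i \<in> {..<n}"
    have "(\<lambda>S. S i) \<in> measurable ?Q (D_dist p \<sigma> (\<lambda>_. 0))"
      unfolding sample_dist_def using i by simp
    moreover have "ell \<sigma> (gA A) \<in> borel_measurable (D_dist p \<sigma> (\<lambda>_. 0))"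
      using ell_meas[OF gm] measurable_cong_sets[OF sets_D refl] by blast
    ultimately show "(\<lambda>S. ell \<sigma> (gA A) (S i)) \<in> borel_measurable ?Q"
      by (rule measurable_compose)
  qed
  have Lpos: "?L S > 0" for S by (auto simp: ell_def intro!: prod_pos)
  have lnL: "ln (?L S) = (\<Sum>i<n. ln (ell \<sigma> (gA A) (S i)))" for S
    by (subst ln_prod) (auto simp: ell_def)
  have Dp: "prob_space (D_dist p \<sigma> (gA A))" by (rule D_prob[OF sig gm])
  have em: "ell \<sigma> (gA A) \<in> borel_measurable (D_dist p \<sigma> (gA A))"
    using ell_meas[OF gm] measurable_cong_sets[OF sets_D refl] by blast
  have lnm: "(\<lambda>z. ln (ell \<sigma> (gA A) z)) \<in> borel_measurable (D_dist p \<sigma> (gA A))"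
    using borel_measurable_ln[OF em] .
  have ci: "integrable (sample_dist n p \<sigma> (gA A)) (\<lambda>S. ln (ell \<sigma> (gA A) (S i)))" if i: "i \<in> {..<n}" for i
    unfolding sample_dist_def PiM_component_integral(1)[OF Dp i lnm] by (rule ln_ell_D(1)[OF sig A])
  have cint: "(\<integral>S. ln (ell \<sigma> (gA A) (S i)) \<partial>sample_dist n p \<sigma> (gA A)) = 1 / (2 * \<sigma>\<^sup>2)" if i: "i \<in> {..<n}" for i
    unfolding sample_dist_def PiM_component_integral(2)[OF Dp i lnm] by (rule ln_ell_D(2)[OF sig A])
  have li: "integrable (sample_dist n p \<sigma> (gA A)) (\<lambda>S. ln (?L S))"
    unfolding lnL by (intro Bochner_Integration.integrable_sum ci)
  have lint: "(\<integral>S. ln (?L S) \<partial>sample_dist n p \<sigma> (gA A)) = real n / (2 * \<sigma>\<^sup>2)"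
  proof -
    have "(\<integral>S. ln (?L S) \<partial>sample_dist n p \<sigma> (gA A)) = (\<Sum>i<n. (\<integral>S. ln (ell \<sigma> (gA A) (S i)) \<partial>sample_dist n p \<sigma> (gA A)))"
      unfolding lnL by (intro Bochner_Integration.integral_sum ci)
    also have "\<dots> = (\<Sum>i<n. 1 / (2 * \<sigma>\<^sup>2))"
      by (intro sum.cong refl cint)
    finally show ?thesis by simp
  qed
  have E': "E \<in> sets ?Q" using E sets_sample by blast
  have "c * measure (density ?Q (\<lambda>S. ennreal (?L S))) E
     \<le> (\<integral>S. ln (?L S) \<partial>density ?Q (\<lambda>S. ennreal (?L S))) + ln (1 + (exp c - 1) * measure ?Q E)"
  proof (rule DV_ineq[OF sample_prob[OF sig zm] Lm Lpos _ _ E' c])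
    show "prob_space (density ?Q (\<lambda>S. ennreal (?L S)))"
      using sample_prob[OF sig gm, of n] unfolding dens .
    show "integrable (density ?Q (\<lambda>S. ennreal (?L S))) (\<lambda>S. ln (?L S))"
      using li unfolding dens .
  qed
  then show ?thesis unfolding dens[symmetric] lint .
qed


lemma card_adm_ge:
  assumes kp: "k + 1 \<le> p"
  shows "real q ^ (k + 1) * real (p choose (k + 1)) \<le> real (card {A. admissible p q k A})"
proof -
  define JJ where "JJ = {J. J \<subseteq> {1..p} \<and> card J = k + 1}"
  define T where "T = (SIGMA J:JJ. PiE J (\<lambda>_. {1..q}))"
  define gr where "gr = (\<lambda>(J, h::nat \<Rightarrow> nat). (\<lambda>j. (h j, j)) ` (J :: nat set))"
  have finJJ: "finite JJ" unfolding JJ_def by (rule finite_subset[of _ "Pow {1..p}"]) auto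
  have cardJJ: "card JJ = p choose (k + 1)"
    unfolding JJ_def using n_subsets[of "{1..p}" "k+1"] by simp
  have cardT: "card T = q ^ (k + 1) * (p choose (k + 1))"
  proof -
    have "card T = (\<Sum>J\<in>JJ. card (PiE J (\<lambda>_. {1..q})))"
      unfolding T_def using finJJ
      by (subst card_SigmaI) (auto simp: JJ_def intro!: finite_PiE elim: finite_subset)
    also have "\<dots> = (\<Sum>J\<in>JJ. q ^ (k + 1))"
    proof (intro sum.cong refl)
      fix J assume "J \<in> JJ"
      then have "finite J" "card J = k + 1" unfolding JJ_def by (auto elim: finite_subset)
      then show "card (PiE J (\<lambda>_. {1..q})) = q ^ (k + 1)" by (simp add: card_PiE)
    qed
    finally show ?thesis using cardJJ by simp
  qed
  have inj: "inj_on gr T"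
  proof (rule inj_onI)
    fix x y assume x: "x \<in> T" and y: "y \<in> T" and e: "gr x = gr y"
    obtain J h where xJ: "x = (J, h)" by (cases x)
    obtain J' h' where yJ: "y = (J', h')" by (cases y)
    have h: "h \<in> PiE J (\<lambda>_. {1..q})" and h': "h' \<in> PiE J' (\<lambda>_. {1..q})"
      using x y unfolding T_def xJ yJ by auto
    have ge: "(\<lambda>j. (h j, j)) ` J = (\<lambda>j. (h' j, j)) ` J'" using e unfolding gr_def xJ yJ by simp
    have JJ': "J = J'"
    proof -
      have "snd ` ((\<lambda>j. (h j, j)) ` J) = J" by (auto simp: image_image)
      moreover have "snd ` ((\<lambda>j. (h' j, j)) ` J') = J'" by (auto simp: image_image)
      ultimately show ?thesis using ge by metis
    qed
    have "h = h'"
    proof (rule PiE_ext[OF h])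
      show "h' \<in> PiE J (\<lambda>_. {1..q})" using h' JJ' by simp
      fix j assume j: "j \<in> J"
      then have "(h j, j) \<in> (\<lambda>j. (h' j, j)) ` J'" using ge by blast
      then show "h j = h' j" by auto
    qed
    then show "x = y" using xJ yJ JJ' by simp
  qed
  have img: "gr ` T \<subseteq> {A. admissible p q k A}"
  proof clarify
    fix J h assume "(J, h) \<in> T"
    then have J: "J \<subseteq> {1..p}" "card J = k + 1" and h: "h \<in> PiE J (\<lambda>_. {1..q})"
      unfolding T_def JJ_def by auto
    have fin: "finite J" using J(1) by (rule finite_subset) simp
    have injg: "inj_on (\<lambda>j. (h j, j)) J" by (auto intro: inj_onI)
    have grJ: "gr (J, h) = (\<lambda>j. (h j, j)) ` J" unfolding gr_def by simp
    show "admissible p q k (gr (J, h))"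
      unfolding admissible_def grJ
    proof (intro conjI)
      show "(\<lambda>j. (h j, j)) ` J \<subseteq> {1..q} \<times> {1..p}" using J h by (auto simp: PiE_def Pi_def)
      show "card ((\<lambda>j. (h j, j)) ` J) \<le> k + 1" using card_image[OF injg] J by simp
      show "inj_on snd ((\<lambda>j. (h j, j)) ` J)" by (auto intro: inj_onI)
    qed
  qed
  have finA: "finite {A. admissible p q k A}"
    by (rule finite_subset[of _ "Pow ({1..q} \<times> {1..p})"]) (auto simp: admissible_def)
  have "card T \<le> card {A. admissible p q k A}"
    using card_inj_on_le[OF inj img finA] .
  then have "real (card T) \<le> real (card {A. admissible p q k A})" by simp
  then show ?thesis unfolding cardT by simp
qed


lemma ln_aux:
  fixes y :: real
  assumes "y \<ge> 1"
  shows "ln y \<le> ln 2 + (y - 2) / 2"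
proof -
  have "ln (y / 2) \<le> y / 2 - 1" using assms by (intro ln_le_minus_one) auto
  moreover have "ln (y / 2) = ln y - ln 2" using assms by (simp add: ln_div)
  ultimately show ?thesis by (simp add: field_simps)
qed

theorem corollary2:
  fixes p q k n :: nat and \<sigma> :: real
    and ghat :: "(nat \<Rightarrow> (nat \<Rightarrow> real) \<times> real) \<Rightarrow> ((nat \<Rightarrow> real) \<Rightarrow> real)"
  assumes "p > 0" "q > 0" "k > 0" "k + 1 \<le> p"
    and "\<sigma> > 0"
    and "ghat \<in> measurable (sample_space n p) (count_space (Gcls p q k))"
    and "real n \<le> (ln (real q ^ (k + 1) * real (p choose (k + 1))) - 2 * ln 2) * \<sigma>\<^sup>2 / 2"
  shows "(\<Sum>g\<in>Gcls p q k. measure (sample_dist n p \<sigma> g)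
            {S \<in> space (sample_dist n p \<sigma> g).
               risk (D_dist p \<sigma> g) (ghat S) - risk (D_dist p \<sigma> g) g \<ge> 1})
          / real (card (Gcls p q k)) \<ge> 1 / 2"
proof -
  note qpos = assms(2) and kp = assms(4) and sig = assms(5) and gh = assms(6) and hyp = assms(7)
  define Adm where "Adm = {A. admissible p q k A}"
  define G where "G = Gcls p q k"
  have G_def': "G = gA ` Adm" unfolding G_def Adm_def Gcls_def ..
  have finAdm: "finite Adm"
    unfolding Adm_def by (rule finite_subset[of _ "Pow ({1..q} \<times> {1..p})"]) (auto simp: admissible_def simp del: atLeastAtMost_iff)
  have injA: "inj_on gA Adm"
  proof (rule inj_onI)
    fix A B assume A: "A \<in> Adm" and B: "B \<in> Adm" and e: "gA A = gA B"
    have As: "A \<subseteq> {1..q} \<times> {1..p}" "inj_on snd A" and Bs: "B \<subseteq> {1..q} \<times> {1..p}" "inj_on snd B"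
      using A B unfolding Adm_def admissible_def by auto
    have "(\<integral>x. gA A x * gA B x \<partial>X_dist p) = 1" using X_orth[OF As As] e by simp
    then show "A = B" using X_orth[OF As Bs] by (simp split: if_splits)
  qed
  have finG: "finite G" unfolding G_def' using finAdm by simp
  define M where "M = real (card G)"
  have cardG: "card G = card Adm" unfolding G_def' using card_image[OF injA] .
  define M0 where "M0 = real q ^ (k + 1) * real (p choose (k + 1))"
  have M0M: "M0 \<le> M" unfolding M0_def M_def cardG Adm_def by (rule card_adm_ge[OF kp])
  have M0pos: "M0 > 0" unfolding M0_def using qpos kp by simp
  have lnM0: "ln M0 \<ge> 2 * ln 2"
  proof -
    have "0 \<le> real n" by simp
    also have "\<dots> \<le> (ln M0 - 2 * ln 2) * \<sigma>\<^sup>2 / 2" using hyp unfolding M0_def .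
    finally have "0 \<le> (ln M0 - 2 * ln 2) * \<sigma>\<^sup>2" by simp
    then show ?thesis using sig by (simp add: zero_le_mult_iff)
  qed
  have lnM: "ln M0 \<le> ln M" using M0pos M0M by simp
  have Mpos: "M > 0" using M0pos M0M by simp
  have lnMpos: "ln M > 0" using lnM lnM0 by (smt (verit) ln_gt_zero_iff ln_less_cancel_iff numeral_less_iff one_less_numeral_iff semiring_norm(76))
  define K where "K = real n / (2 * \<sigma>\<^sup>2)"
  have K: "K \<le> (ln M0 - 2 * ln 2) / 4"
  proof -
    have "K \<le> ((ln M0 - 2 * ln 2) * \<sigma>\<^sup>2 / 2) / (2 * \<sigma>\<^sup>2)"
      unfolding K_def using hyp sig unfolding M0_def by (intro divide_right_mono) auto
    also have "\<dots> = (ln M0 - 2 * ln 2) / 4" using sig by (simp add: field_simps)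
    finally show ?thesis .
  qed
  have KM: "K + ln 2 \<le> ln M / 2"
  proof -
    have "K * 4 \<le> ln M0 - 2 * ln 2" using K by (simp add: field_simps)
    then show ?thesis using lnM0 lnM by (simp add: field_simps)
  qed
  define E where "E g = ghat -` {g} \<inter> space (sample_space n p)" for g
  have Esets: "E g \<in> sets (sample_space n p)" if "g \<in> G" for g
    unfolding E_def using measurable_sets[OF gh, of "{g}"] that by (simp add: G_def)
  have ghG: "ghat S \<in> G" if "S \<in> space (sample_space n p)" for S
    using measurable_space[OF gh that] by (simp add: G_def)
  define Q where "Q = sample_dist n p \<sigma> (\<lambda>_. 0)"
  have zm: "(\<lambda>_. 0::real) \<in> borel_measurable (PiM {1..p} (\<lambda>_. (borel::real measure)))" by simp
  interpret Q: prob_space Q unfolding Q_def by (rule sample_prob[OF sig zm])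
  define a where "a g = measure (sample_dist n p \<sigma> g) (E g)" for g
  define b where "b g = measure Q (E g)" for g
  have sumb: "(\<Sum>g\<in>G. b g) \<le> 1"
  proof -
    have "(\<Sum>g\<in>G. b g) = measure Q (\<Union>g\<in>G. E g)"
      unfolding b_def
    proof (rule measure_finite_Union[symmetric, OF finG])
      show "E ` G \<subseteq> sets Q" using Esets sets_sample unfolding Q_def by blast
      show "disjoint_family_on E G" unfolding disjoint_family_on_def E_def by auto
      show "emeasure Q (E i) \<noteq> \<infinity>" if "i \<in> G" for i using Q.emeasure_finite[of "E i"] by simp
    qed
    also have "\<dots> \<le> 1" by (rule Q.prob_le_1)
    finally show ?thesis .
  qed
  have b0: "b g \<ge> 0" for g unfolding b_def by simp
  have per: "ln M * a g \<le> K + ln 2 + ((M - 1) * b g - 1) / 2" if g: "g \<in> G" for g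
  proof -
    obtain A where A: "admissible p q k A" and gA: "g = gA A" using g unfolding G_def' Adm_def by auto
    have "ln M * a g \<le> K + ln (1 + (exp (ln M) - 1) * b g)"
      unfolding a_def b_def K_def Q_def gA
      by (rule per_g[OF sig A Esets[OF g[unfolded gA]]]) (use lnMpos in simp)
    also have "exp (ln M) = M" using Mpos by simp
    also have "ln (1 + (M - 1) * b g) \<le> ln 2 + ((1 + (M - 1) * b g) - 2) / 2"
    proof (rule ln_aux)
      have "M \<ge> 1" using lnMpos by (metis ln_le_zero_iff not_le Mpos less_imp_le)
      then show "1 + (M - 1) * b g \<ge> 1" using b0[of g] by simp
    qed
    finally show ?thesis by (simp add: field_simps)
  qed
  have suma: "ln M * (\<Sum>g\<in>G. a g) \<le> M * (K + ln 2)"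
  proof -
    have "ln M * (\<Sum>g\<in>G. a g) = (\<Sum>g\<in>G. ln M * a g)" by (simp add: sum_distrib_left)
    also have "\<dots> \<le> (\<Sum>g\<in>G. (K + ln 2 - 1/2) + ((M - 1) / 2) * b g)"
    proof (intro sum_mono)
      fix g assume "g \<in> G"
      from per[OF this] show "ln M * a g \<le> (K + ln 2 - 1/2) + ((M - 1) / 2) * b g"
        by (simp add: field_simps)
    qed
    also have "\<dots> = M * (K + ln 2 - 1/2) + ((M - 1) / 2) * (\<Sum>g\<in>G. b g)"
      by (simp add: sum.distrib sum_distrib_left M_def)
    also have "\<dots> \<le> M * (K + ln 2 - 1/2) + ((M - 1) / 2) * 1"
    proof -
      have "M \<ge> 1" using lnMpos by (metis ln_le_zero_iff not_le Mpos less_imp_le)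
      then show ?thesis using sumb by (intro add_left_mono mult_left_mono) auto
    qed
    also have "\<dots> \<le> M * (K + ln 2)" by (simp add: field_simps)
    finally show ?thesis .
  qed
  have suma2: "(\<Sum>g\<in>G. a g) \<le> M / 2"
  proof -
    have "ln M * (\<Sum>g\<in>G. a g) \<le> M * (ln M / 2)"
      using suma KM Mpos by (smt (verit) mult_left_mono)
    then have "ln M * (\<Sum>g\<in>G. a g) \<le> ln M * (M / 2)" by (simp add: field_simps)
    then show ?thesis using lnMpos by simp
  qed
  have err: "measure (sample_dist n p \<sigma> g)
            {S \<in> space (sample_dist n p \<sigma> g). risk (D_dist p \<sigma> g) (ghat S) - risk (D_dist p \<sigma> g) g \<ge> 1}
        = 1 - a g" if g: "g \<in> G" for g
  proof -
    obtain A where A: "admissible p q k A" and gA: "g = gA A" using g unfolding G_def' Adm_def by auto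
    note gm = gA_meas_borel[OF adm_sub[OF A]]
    interpret P: prob_space "sample_dist n p \<sigma> g" unfolding gA by (rule sample_prob[OF sig gm])
    have "{S \<in> space (sample_dist n p \<sigma> g). risk (D_dist p \<sigma> g) (ghat S) - risk (D_dist p \<sigma> g) g \<ge> 1}
        = space (sample_dist n p \<sigma> g) - E g"
    proof (intro set_eqI iffI)
      fix S assume "S \<in> {S \<in> space (sample_dist n p \<sigma> g). risk (D_dist p \<sigma> g) (ghat S) - risk (D_dist p \<sigma> g) g \<ge> 1}"
      then have S: "S \<in> space (sample_dist n p \<sigma> g)" and r: "risk (D_dist p \<sigma> g) (ghat S) - risk (D_dist p \<sigma> g) g \<ge> 1"
        by auto
      have "ghat S \<noteq> g" using r by auto
      then show "S \<in> space (sample_dist n p \<sigma> g) - E g" using S by (auto simp: E_def)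
    next
      fix S assume S: "S \<in> space (sample_dist n p \<sigma> g) - E g"
      then have Ss: "S \<in> space (sample_space n p)" and ne: "ghat S \<noteq> g"
        by (auto simp: E_def space_sample)
      obtain B where B: "admissible p q k B" and gB: "ghat S = gA B"
        using ghG[OF Ss] unfolding G_def' Adm_def by auto
      have "A \<noteq> B" using ne gA gB by auto
      then have "risk (D_dist p \<sigma> g) (ghat S) - risk (D_dist p \<sigma> g) g = 1"
        unfolding gA gB by (rule risk_diff[OF sig A B])
      then show "S \<in> {S \<in> space (sample_dist n p \<sigma> g). risk (D_dist p \<sigma> g) (ghat S) - risk (D_dist p \<sigma> g) g \<ge> 1}"
        using S by auto
    qed
    also have "measure (sample_dist n p \<sigma> g) \<dots> = 1 - a g"
      unfolding a_def by (rule P.prob_compl) (use Esets[OF g] sets_sample in blast)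
    finally show ?thesis .
  qed
  have "(\<Sum>g\<in>G. measure (sample_dist n p \<sigma> g)
            {S \<in> space (sample_dist n p \<sigma> g). risk (D_dist p \<sigma> g) (ghat S) - risk (D_dist p \<sigma> g) g \<ge> 1})
      = (\<Sum>g\<in>G. 1 - a g)"
    by (intro sum.cong refl err)
  also have "\<dots> = M - (\<Sum>g\<in>G. a g)" by (simp add: sum_subtractf M_def)
  finally have S: "(\<Sum>g\<in>G. measure (sample_dist n p \<sigma> g)
            {S \<in> space (sample_dist n p \<sigma> g). risk (D_dist p \<sigma> g) (ghat S) - risk (D_dist p \<sigma> g) g \<ge> 1})
      = M - (\<Sum>g\<in>G. a g)" .
  have "1 / 2 \<le> (M - (\<Sum>g\<in>G. a g)) / M"
    using suma2 Mpos by (simp add: field_simps)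
  then show ?thesis using S unfolding G_def M_def by simp
qed


end
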